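(* Let $p$ be a prime. (1) For every $X\in\mathcal{X}_p$ there exist $n\in\mathbb{N}$ and a cyclic subgroup $H$ of the multiplicative group $\mathbb{Z}_{p^n}^\times$ such that $X=\pi_n^{-1}(H)$. (2) For every $n\in\mathbb{N}$ and every cyclic subgroup $H$ of $\mathbb{Z}_{p^n}^\times$ of order $|H|\ge\max\{p,3\}$ there exists $a\in\mathbb{N}\setminus p\mathbb{N}$ such that $\pi_n^{-1}(H)=\overline{a^{\mathbb{N}}}\in\mathcal{X}_p$.
   Context: $\mathbb{N}=\{1,2,\dots\}$, $\mathbb{N}_0=\{0\}\cup\mathbb{N}$, $x^{\mathbb{N}}=\{x^k:k\in\mathbb{N}\}$. $\mathbb{Z}_{p^n}=\mathbb{Z}/p^n\mathbb{Z}$ with unit group $\mathbb{Z}_{p^n}^\times$, and $\pi_n:\mathbb{N}\to\mathbb{Z}_{p^n}$, $x\mapsto x+p^n\mathbb{Z}$. The $p$-adic topology on $\mathbb{N}\setminus p\mathbb{N}$ is generated by the sets $x+p^m\mathbb{N}_0$ ($x,m\in\mathbb{N}$). $\mathcal{X}_p=\{\overline{a^{\mathbb{N}}}:a\in\mathbb{N}\setminus p\mathbb{N},\ a\ne1\}$, closures taken in the $p$-adic topology on $\mathbb{N}\setminus p\mathbb{N}$. *)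

theory Defs
  imports "HOL-Analysis.Analysis" "HOL-Algebra.Elementary_Groups" "HOL-Number_Theory.Residues"
begin

definition coprimeN :: "nat \<Rightarrow> nat set" where
  "coprimeN p = {x. x \<ge> 1 \<and> \<not> p dvd x}"

definition padic_top :: "nat \<Rightarrow> nat topology" where
  "padic_top p = subtopology
     (topology_generated_by {{x + p ^ m * k | k. True} | x m. x \<ge> 1 \<and> m \<ge> 1})
     (coprimeN p)"

definition powsN :: "nat \<Rightarrow> nat set" where
  "powsN a = {a ^ k | k. k \<ge> 1}"

definition Xp :: "nat \<Rightarrow> nat set set" where
  "Xp p = {(padic_top p) closure_of (powsN a) | a. a \<in> coprimeN p \<and> a \<noteq> 1}"

definition Zunits :: "nat \<Rightarrow> nat \<Rightarrow> int monoid" where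
  "Zunits p n = units_of (residue_ring (int p ^ n))"

definition preim :: "nat \<Rightarrow> nat \<Rightarrow> int set \<Rightarrow> nat set" where
  "preim p n H = {x. x \<ge> 1 \<and> int x mod (int p ^ n) \<in> H}"

end

theory Submission
  imports Defs
begin


lemma one_plus_pow_cong:
  fixes x :: int
  shows "[(1 + x) ^ c = 1 + int c * x] (mod x^2)"
proof (induction c)
  case 0 then show ?case by simp
next
  case (Suc c)
  have "(1 + x) ^ Suc c = (1 + x)^c * (1 + x)" by simp
  also have "[\<dots> = (1 + int c * x) * (1 + x)] (mod x^2)"
    using Suc cong_mult cong_refl by blast
  also have "(1 + int c * x) * (1 + x) = (1 + int (Suc c) * x) + int c * x^2"
    by (simp add: algebra_simps power2_eq_square)
  also have "[\<dots> = 1 + int (Suc c) * x] (mod x^2)"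
    by (simp add: cong_def)
  finally show ?case .
qed

lemma lte_step:
  fixes p :: nat and z :: int
  assumes p: "prime p" and i: "i \<ge> 1" and i2: "p = 2 \<longrightarrow> i \<ge> 2"
    and d1: "int p ^ i dvd z - 1" and d2: "\<not> int p ^ (i+1) dvd z - 1"
  shows "int p ^ (i+1) dvd z ^ p - 1 \<and> \<not> int p ^ (i+2) dvd z ^ p - 1"
proof -
  obtain t where t: "z - 1 = int p ^ i * t" using d1 by blast
  have nt: "\<not> int p dvd t"
  proof
    assume "int p dvd t"
    then obtain s where "t = int p * s" by blast
    then have "z - 1 = int p ^ (i+1) * s" using t by (simp add: algebra_simps)
    then show False using d2 by simp
  qed
  define x where "x = z - 1"
  have z: "z = x + 1" by (simp add: x_def)
  have p2: "p \<ge> 2" using p prime_ge_2_nat by blast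
  define f where "f k = of_nat (p choose k) * x ^ k" for k
  have bin: "z ^ p = (\<Sum>k\<le>p. f k)"
    unfolding z f_def binomial_ring by simp
  define g where "g (k::nat) = (if k = 0 then 1 else 0) + (if k = 1 then int p * x else 0)" for k
  have fg: "[f k = g k] (mod int p ^ (i+2))" if "k \<le> p" for k
  proof -
    consider "k = 0" | "k = 1" | "k \<ge> 2" "k < p" | "k = p" "k \<ge> 2" using \<open>k \<le> p\<close> p2 by linarith
    then show ?thesis
    proof cases
      case 1 then show ?thesis by (simp add: f_def g_def)
    next
      case 2 then show ?thesis by (simp add: f_def g_def)
    next
      case 3
      have a: "int p dvd of_nat (p choose k)"
        using dvd_choose_prime[of k p] 3 p by (simp add: int_dvd_int_iff)
      have b: "(int p ^ i) ^ k dvd x ^ k" using t x_def by (simp add: dvd_power_same)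
      have c: "int p ^ (2*i) dvd (int p ^ i) ^ k"
        by (metis "3"(1) le_imp_power_dvd mult.commute power_mult) 
      have "int p * int p ^ (2*i) dvd f k"
        unfolding f_def using a b c by (meson dvd_trans mult_dvd_mono)
      moreover have "int p ^ (i+2) dvd int p * int p ^ (2*i)"
        using i by (simp add: le_imp_power_dvd flip: power_Suc)
      ultimately have "int p ^ (i+2) dvd f k" using dvd_trans by blast
      then show ?thesis using 3 by (simp add: g_def cong_0_iff)
    next
      case 4
      have b: "(int p ^ i) ^ p dvd x ^ p" using t x_def by (simp add: dvd_power_same)
      have "i + 2 \<le> i * p"
      proof (cases "p = 2")
        case True then show ?thesis using i2 by simp
      next
        case False then have "p \<ge> 3" using p2 by linarith
        then have "i * 3 \<le> i * p" by simp
        then show ?thesis using i by linarith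
      qed
      then have c: "int p ^ (i+2) dvd (int p ^ i) ^ p"
        by (metis le_imp_power_dvd power_mult)
      have "int p ^ (i+2) dvd f k" unfolding f_def using 4 dvd_trans[OF c b] by simp
      then show ?thesis using 4 by (simp add: g_def cong_0_iff)
    qed
  qed
  have "[(\<Sum>k\<le>p. f k) = (\<Sum>k\<le>p. g k)] (mod int p ^ (i+2))"
    by (rule cong_sum) (use fg in auto)
  moreover have "(\<Sum>k\<le>p. g k) = 1 + int p * x"
    unfolding g_def using p2 by (simp add: sum.distrib)
  ultimately have cz: "[z ^ p = 1 + int p * x] (mod int p ^ (i+2))" using bin by simp
  then have "int p ^ (i+2) dvd z ^ p - (1 + int p * x)"
    by (simp add: cong_iff_dvd_diff cong_sym_eq)
  then obtain r where r: "z ^ p - (1 + int p * x) = int p ^ (i+2) * r" by blast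
  have e: "z ^ p - 1 = int p ^ (i+1) * (t + int p * r)"
    using r t x_def by (simp add: algebra_simps)
  show ?thesis
  proof
    show "int p ^ (i+1) dvd z ^ p - 1" using e by simp
    show "\<not> int p ^ (i+2) dvd z ^ p - 1"
    proof
      assume "int p ^ (i+2) dvd z ^ p - 1"
      then have "int p ^ (i+1) * int p dvd int p ^ (i+1) * (t + int p * r)"
        using e by simp
      then have "int p dvd t + int p * r" using p
        by (subst (asm) dvd_mult_cancel_left) auto
      then have "int p dvd t" by (simp add: dvd_add_left_iff)
      then show False using nt by simp
    qed
  qed
qed


lemma lte_iter:
  fixes p :: nat and b :: int
  assumes p: "prime p" and j: "j \<ge> 1" and j2: "p = 2 \<longrightarrow> j \<ge> 2"
    and d1: "int p ^ j dvd b - 1" and d2: "\<not> int p ^ (j+1) dvd b - 1"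
  shows "int p ^ (j+s) dvd b ^ (p ^ s) - 1 \<and> \<not> int p ^ (j+s+1) dvd b ^ (p ^ s) - 1"
proof (induction s)
  case 0 then show ?case using d1 d2 by simp
next
  case (Suc s)
  have "int p ^ (j+s+1) dvd (b ^ (p ^ s)) ^ p - 1 \<and> \<not> int p ^ (j+s+2) dvd (b ^ (p ^ s)) ^ p - 1"
    by (rule lte_step) (use p j j2 Suc in auto)
  moreover have "(b ^ (p ^ s)) ^ p = b ^ (p ^ Suc s)"
    by (simp add: power_mult[symmetric] mult.commute)
  ultimately show ?case by (simp add: add.assoc)
qed

lemma key_cover:
  fixes p :: nat and b y :: int
  assumes p: "prime p" and j: "j \<ge> 1" and j2: "p = 2 \<longrightarrow> j \<ge> 2"
    and d1: "int p ^ j dvd b - 1" and d2: "\<not> int p ^ (j+1) dvd b - 1"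
    and y: "[y = 1] (mod int p ^ j)"
  shows "\<exists>c::nat. [b ^ c = y] (mod int p ^ (j + s))"
proof (induction s)
  case 0
  have "[b = 1] (mod int p ^ j)" using d1 by (simp add: cong_iff_dvd_diff)
  then have "[b ^ 1 = y] (mod int p ^ j)" using cong_trans cong_sym[OF y] by simp
  then show ?case unfolding add_0_right by (rule exI)
next
  case (Suc s)
  define m where "m = j + s"
  have m1: "m \<ge> 1" using j m_def by simp
  obtain k where k: "[b ^ k = y] (mod int p ^ m)" using Suc m_def by blast
  then obtain s' where s': "b ^ k - y = int p ^ m * s'" by (auto simp: cong_iff_dvd_diff)
  define B where "B = b ^ (p ^ s)"
  have L: "int p ^ (j+s) dvd b ^ (p ^ s) - 1 \<and> \<not> int p ^ (j+s+1) dvd b ^ (p ^ s) - 1"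
    by (rule lte_iter[OF p j j2 d1 d2])
  have Bd: "int p ^ m dvd B - 1" "\<not> int p ^ (m+1) dvd B - 1"
    using L unfolding m_def B_def by simp_all
  then obtain w where w: "B - 1 = int p ^ m * w" by blast
  have pp: "prime (int p)" using p by simp
  have nw: "\<not> int p dvd w"
  proof
    assume "int p dvd w"
    then obtain u where "w = int p * u" by blast
    then have "B - 1 = int p ^ (m+1) * u" using w by (simp add: algebra_simps)
    then show False using Bd(2) by simp
  qed
  have nb: "\<not> int p dvd b"
  proof
    assume "int p dvd b"
    moreover have "int p dvd b - 1"
      using dvd_trans[OF dvd_power[of j "int p"] d1] j by simp
    ultimately have "int p dvd b - (b - 1)" by (rule dvd_diff)
    then have "int p dvd 1" by simp
    then show False using pp by (simp add: prime_elem_def)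
  qed
  have "coprime (int p) b" "coprime (int p) w"
    using nw nb pp prime_imp_coprime by blast+
  then have "coprime (b ^ k * w) (int p)"
    by (simp add: coprime_commute)
  then obtain x where x: "[b ^ k * w * x = 1] (mod int p)" using cong_solve_coprime_int by blast
  define c where "c = nat ((- x * s') mod int p)"
  have ci: "int c = (- x * s') mod int p" unfolding c_def using p
    by (simp add: prime_gt_0_nat)
  have "[b ^ k * w * int c = b ^ k * w * (- x * s')] (mod int p)"
    unfolding ci by (simp add: cong_def mod_mult_right_eq)
  moreover have "b ^ k * w * (- x * s') = - ((b ^ k * w * x) * s')" by (simp add: algebra_simps)
  moreover have "[- ((b ^ k * w * x) * s') = - (1 * s')] (mod int p)"
    using x by (intro cong_minus_minus_iff[THEN iffD2] cong_mult cong_refl)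
  ultimately have "[b ^ k * w * int c = - s'] (mod int p)"
    by (simp only: mult_1) (rule cong_trans)
  then have pd: "int p dvd b ^ k * w * int c + s'" by (simp add: cong_iff_dvd_diff)
  have Bw: "B = 1 + int p ^ m * w" using w by linarith
  have c1: "[B ^ c = 1 + int c * (int p ^ m * w)] (mod (int p ^ m * w)^2)"
    using one_plus_pow_cong[of "int p ^ m * w" c] unfolding Bw .
  have "int p ^ (m+1) dvd (int p ^ m * w)^2"
  proof -
    have "int p ^ (m+1) dvd int p ^ (m+m)" using m1 by (intro le_imp_power_dvd) simp
    moreover have "(int p ^ m * w)^2 = int p ^ (m+m) * w^2"
      by (simp only: power_mult_distrib power_add power2_eq_square mult_ac)
    ultimately show ?thesis by simp
  qed
  then have c2: "[B ^ c = 1 + int c * (int p ^ m * w)] (mod int p ^ (m+1))"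
    using c1 cong_dvd_modulus by blast
  have "b ^ (k + p ^ s * c) = b ^ k * B ^ c"
    by (simp add: B_def power_add power_mult)
  also have "[\<dots> = b ^ k * (1 + int c * (int p ^ m * w))] (mod int p ^ (m+1))"
    using c2 by (intro cong_mult cong_refl)
  also have "[b ^ k * (1 + int c * (int p ^ m * w)) = y] (mod int p ^ (m+1))"
  proof -
    have e: "b ^ k * (1 + int c * (int p ^ m * w)) - y = int p ^ m * (b ^ k * w * int c + s')"
    proof -
      have ys: "y = b ^ k - int p ^ m * s'" using s' by linarith
      show ?thesis unfolding ys by (simp add: algebra_simps)
    qed
    have "int p ^ (m+1) dvd int p ^ m * (b ^ k * w * int c + s')"
      using pd by simp
    then show ?thesis unfolding cong_iff_dvd_diff e .
  qed
  finally show ?case unfolding m_def by (intro exI[of _ "k + p ^ s * c"]) simp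
qed



abbreviation "Bas p \<equiv> {{x + p ^ m * k | k. True} | x m. (x::nat) \<ge> 1 \<and> (m::nat) \<ge> 1}"

lemma nbhd:
  assumes "generate_topology_on (Bas p) T" "x \<in> T"
  shows "\<exists>m\<ge>1. {x + p ^ m * k | k. True} \<subseteq> T"
  using assms
proof (induction arbitrary: x rule: generate_topology_on.induct)
  case Empty then show ?case by simp
next
  case (Int a b)
  then obtain m1 m2 where m1: "m1 \<ge> 1" "{x + p ^ m1 * k | k. True} \<subseteq> a"
    and m2: "m2 \<ge> 1" "{x + p ^ m2 * k | k. True} \<subseteq> b" by blast
  define m where "m = max m1 m2"
  have s: "{x + p ^ m * k | k. True} \<subseteq> {x + p ^ mi * k | k. True}" if "mi \<le> m" for mi
  proof
    fix y assume "y \<in> {x + p ^ m * k | k. True}"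
    then obtain k where "y = x + p ^ m * k" by blast
    moreover have "p ^ m = p ^ mi * p ^ (m - mi)" using that by (simp flip: power_add)
    ultimately have "y = x + p ^ mi * (p ^ (m - mi) * k)" by simp
    then show "y \<in> {x + p ^ mi * k | k. True}" by blast
  qed
  have m0: "m \<ge> 1" using m1 m_def by simp
  have A: "{x + p ^ m * k | k. True} \<subseteq> a"
    using subset_trans[OF s[of m1] m1(2)] m_def by simp
  have B: "{x + p ^ m * k | k. True} \<subseteq> b"
    using subset_trans[OF s[of m2] m2(2)] m_def by simp
  show ?case by (intro exI[of _ m] conjI m0 Int_greatest A B)
next
  case (UN K)
  then obtain k where "k \<in> K" "x \<in> k" by blast
  with UN obtain m where "m \<ge> 1" "{x + p ^ m * k | k. True} \<subseteq> k" by blast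
  then show ?case using \<open>k \<in> K\<close> by blast
next
  case (Basis s)
  then obtain y m where s: "s = {y + p ^ m * k | k. True}" "m \<ge> 1" by blast
  with Basis obtain k0 where x: "x = y + p ^ m * k0" by blast
  have "{x + p ^ m * k | k. True} \<subseteq> s"
  proof
    fix z assume "z \<in> {x + p ^ m * k | k. True}"
    then obtain k where "z = x + p ^ m * k" by blast
    then have "z = y + p ^ m * (k0 + k)" using x by (simp add: algebra_simps)
    then show "z \<in> s" using s by blast
  qed
  then show ?case using s by blast
qed

definition clos_set :: "nat \<Rightarrow> nat \<Rightarrow> nat set" where
  "clos_set p a = {x \<in> coprimeN p. \<forall>m. \<exists>k\<ge>1. [a ^ k = x] (mod p ^ m)}"

lemma powsN_sub:
  assumes "prime p" "a \<in> coprimeN p"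
  shows "powsN a \<subseteq> coprimeN p"
proof
  fix y assume "y \<in> powsN a"
  then obtain k where k: "y = a ^ k" "k \<ge> 1" unfolding powsN_def by blast
  have "a \<ge> 1" "\<not> p dvd a" using assms(2) unfolding coprimeN_def by auto
  then have "y \<ge> 1" "\<not> p dvd y" using k assms(1) prime_dvd_power by auto
  then show "y \<in> coprimeN p" unfolding coprimeN_def by simp
qed

lemma closure_char:
  assumes p: "prime p" and a: "a \<in> coprimeN p" "a \<ge> 2"
  shows "padic_top p closure_of powsN a = clos_set p a"
proof -
  have cl: "padic_top p closure_of powsN a
      = coprimeN p \<inter> (topology_generated_by (Bas p) closure_of powsN a)"
    unfolding padic_top_def
    by (rule closure_of_subtopology_open) (use powsN_sub[OF p a(1)] in blast)
  have p1: "p \<ge> 2" using p prime_ge_2_nat by blast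
  show ?thesis
  proof (rule subset_antisym; rule subsetI)
    fix x assume "x \<in> padic_top p closure_of powsN a"
    then have x: "x \<in> coprimeN p" "x \<in> topology_generated_by (Bas p) closure_of powsN a"
      using cl by auto
    have "\<exists>k\<ge>1. [a ^ k = x] (mod p ^ m)" for m
    proof (cases "m = 0")
      case True then show ?thesis by (intro exI[of _ 1]) simp
    next
      case False
      define T where "T = {x + p ^ m * k | k. True}"
      have "x \<ge> 1" using x(1) unfolding coprimeN_def by simp
      then have TB: "T \<in> Bas p" unfolding T_def
        by (rule_tac CollectI, rule_tac exI[of _ x], rule_tac exI[of _ m]) (use False in simp)
      have oT: "openin (topology_generated_by (Bas p)) T"
        by (rule openin_topology_generated_by_iff[THEN iffD2, OF generate_topology_on.Basis[OF TB]])
      have xT: "x \<in> T" unfolding T_def by (intro CollectI exI[of _ 0]) simp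
      have "\<exists>y. y \<in> powsN a \<and> y \<in> T"
        using x(2)[unfolded in_closure_of] xT oT by blast
      then obtain y where y: "y \<in> powsN a" "y \<in> T" by blast
      from y(1) obtain k where "y = a ^ k" "k \<ge> 1" unfolding powsN_def by blast
      moreover from y(2) obtain q where "y = x + p ^ m * q" unfolding T_def by blast
      ultimately have ak: "a ^ k = x + p ^ m * q" "k \<ge> 1" by simp_all
      then have "[a ^ k = x] (mod p ^ m)" unfolding cong_def by simp
      then show ?thesis using \<open>k \<ge> 1\<close> by blast
    qed
    then show "x \<in> clos_set p a" using x(1) unfolding clos_set_def by blast
  next
    fix x assume "x \<in> clos_set p a"
    then have x: "x \<in> coprimeN p" and cx: "\<And>m. \<exists>k\<ge>1. [a ^ k = x] (mod p ^ m)"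
      unfolding clos_set_def by auto
    have x1: "x \<ge> 1" using x unfolding coprimeN_def by simp
    have "x \<in> topology_generated_by (Bas p) closure_of powsN a"
      unfolding in_closure_of
    proof (intro conjI allI impI)
      have X1: "x \<in> {x + p ^ 1 * k | k. True}" by (intro CollectI exI[of _ 0]) simp
      have X2: "{x + p ^ 1 * k | k. True} \<in> Bas p"
        by (rule CollectI, rule exI[of _ x], rule exI[of _ "1::nat"]) (use x1 in simp)
      show "x \<in> topspace (topology_generated_by (Bas p))"
        unfolding topology_generated_by_topspace by (rule UnionI[OF X2 X1])
    next
      fix T assume T: "x \<in> T \<and> openin (topology_generated_by (Bas p)) T"
      from T have "openin (topology_generated_by (Bas p)) T" by (rule conjunct2)
      then have "generate_topology_on (Bas p) T" by (rule openin_topology_generated_by)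
      from nbhd[OF this conjunct1[OF T]] obtain m where m: "m \<ge> 1" "{x + p ^ m * k | k. True} \<subseteq> T"
        by blast
      obtain k where k: "k \<ge> 1" "[a ^ k = x] (mod p ^ m)" using cx by blast
      define ph where "ph = totient (p ^ m)"
      have "\<not> p dvd a" using a(1) by (simp add: coprimeN_def)
      then have "coprime p a" by (rule prime_imp_coprime[OF p])
      then have cop: "coprime a (p ^ m)" by (simp add: coprime_commute)
      have e1: "[a ^ ph = 1] (mod p ^ m)" unfolding ph_def by (rule euler_theorem[OF cop])
      have "[(a ^ ph) ^ x = 1] (mod p ^ m)" using cong_pow[OF e1, of x] by simp
      then have "[a ^ k * (a ^ ph) ^ x = x * 1] (mod p ^ m)" using k(2) cong_mult by blast
      then have c: "[a ^ (k + ph * x) = x] (mod p ^ m)" by (simp add: power_add power_mult)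
      have "0 < p ^ m" using p1 by simp
      then have ph1: "ph \<ge> 1" unfolding ph_def by (simp add: Suc_leI)
      have "1 * x \<le> ph * x" using ph1 by (rule mult_le_mono1)
      then have xle: "x \<le> k + ph * x" by linarith
      have "x < 2 ^ x" by (rule less_exp)
      also have "\<dots> \<le> a ^ x" by (rule power_mono) (use a(2) in auto)
      also have "\<dots> \<le> a ^ (k + ph * x)"
        by (rule power_increasing[OF xle]) (use a(2) in simp)
      finally have le: "x \<le> a ^ (k + ph * x)" by simp
      then have "p ^ m dvd a ^ (k + ph * x) - x" using c cong_altdef_nat by blast
      then obtain q where "a ^ (k + ph * x) - x = p ^ m * q" by blast
      then have "a ^ (k + ph * x) = x + p ^ m * q" using le by simp
      then have "a ^ (k + ph * x) \<in> {x + p ^ m * k | k. True}" by (intro CollectI exI[of _ q]) simp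
      then have "a ^ (k + ph * x) \<in> T" using m(2) by (rule subsetD[rotated])
      moreover have "a ^ (k + ph * x) \<in> powsN a" unfolding powsN_def using k(1)
        by (intro CollectI exI[of _ "k + ph * x"]) simp
      ultimately show "\<exists>y. y \<in> powsN a \<and> y \<in> T" by blast
    qed
    then show "x \<in> padic_top p closure_of powsN a" unfolding cl by (rule IntI[OF x])
  qed
qed



lemma (in group) cyclic_sub_iff:
  assumes H: "subgroup H G"
  shows "cyclic_group (subgroup_generated G H) \<longleftrightarrow> (\<exists>g\<in>carrier G. H = generate G {g})"
proof -
  have cH: "carrier (subgroup_generated G H) = H"
    using H by (rule subgroup.carrier_subgroup_generated_subgroup)
  have pw: "x [^]\<^bsub>subgroup_generated G H\<^esub> (n::int) = x [^] n" if "x \<in> H" for x n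
    using int_pow_subgroup_generated[of x H n] cH that by simp
  have HG: "H \<subseteq> carrier G" using H by (rule subgroup.subset)
  have "cyclic_group (subgroup_generated G H) \<longleftrightarrow>
      (\<exists>x\<in>carrier (subgroup_generated G H). carrier (subgroup_generated G H)
          = range (\<lambda>n::int. x [^]\<^bsub>subgroup_generated G H\<^esub> n))"
    by (rule group.cyclic_group[OF group_subgroup_generated])
  also have "\<dots> \<longleftrightarrow> (\<exists>x\<in>H. H = range (\<lambda>n::int. x [^] n))"
  proof -
    have "range (\<lambda>n::int. x [^]\<^bsub>subgroup_generated G H\<^esub> n) = range (\<lambda>n::int. x [^] n)"
      if "x \<in> H" for x
      using pw[OF that] by simp
    then show ?thesis unfolding cH by auto
  qed
  also have "\<dots> \<longleftrightarrow> (\<exists>g\<in>carrier G. H = generate G {g})"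
  proof
    assume "\<exists>x\<in>H. H = range (\<lambda>n::int. x [^] n)"
    then obtain x where x: "x \<in> H" "H = range (\<lambda>n::int. x [^] n)" by blast
    have "x \<in> carrier G" using x HG by blast
    moreover have "H = generate G {x}" using x(2) generate_pow[OF \<open>x \<in> carrier G\<close>] by auto
    ultimately show "\<exists>g\<in>carrier G. H = generate G {g}" by blast
  next
    assume "\<exists>g\<in>carrier G. H = generate G {g}"
    then obtain g where g: "g \<in> carrier G" "H = generate G {g}" by blast
    have "g \<in> H" using g(2) generate.incl[of g "{g}" G] by simp
    moreover have "H = range (\<lambda>n::int. g [^] n)" using g generate_pow[OF g(1)] by auto
    ultimately show "\<exists>x\<in>H. H = range (\<lambda>n::int. x [^] n)" by blast
  qed
  finally show ?thesis .
qed

locale zu =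
  fixes p n :: nat
  assumes p: "prime p" and n: "n \<ge> 1"
begin

abbreviation "M \<equiv> int p ^ n"
abbreviation "R \<equiv> residue_ring M"

lemma M_gt1: "M > 1"
proof -
  have p2: "(2::int) \<le> int p" using p prime_ge_2_nat by fastforce
  have "int p ^ 1 \<le> int p ^ n" by (rule power_increasing[OF n]) (use p2 in simp)
  then have "int p \<le> M" by (simp only: power_one_right)
  then show ?thesis using p2 by linarith
qed

sublocale res: residues M R
  by unfold_locales (use M_gt1 in simp_all)

lemma grp: "group (Zunits p n)"
  unfolding Zunits_def by (rule res.units_group)

lemma carrierZ: "carrier (Zunits p n) = {x. 0 < x \<and> x < M \<and> coprime x M}"
  unfolding Zunits_def units_of_carrier by (rule res.res_units_eq)

lemma finZ: "finite (carrier (Zunits p n))"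
  unfolding Zunits_def units_of_carrier by simp

lemma powZ: "g \<in> carrier (Zunits p n) \<Longrightarrow> g [^]\<^bsub>Zunits p n\<^esub> (k::nat) = g ^ k mod M"
proof -
  assume g: "g \<in> carrier (Zunits p n)"
  then have gu: "g \<in> Units R" unfolding Zunits_def units_of_carrier .
  have gm: "g mod M = g" using g carrierZ by simp
  have "g [^]\<^bsub>Zunits p n\<^esub> k = g [^]\<^bsub>R\<^esub> k"
    unfolding Zunits_def by (rule res.units_of_pow[OF gu])
  also have "\<dots> = (g mod M) [^]\<^bsub>R\<^esub> k" using gm by simp
  also have "\<dots> = g ^ k mod M" by (rule res.pow_cong)
  finally show ?thesis .
qed

lemma genZ:
  assumes g: "g \<in> carrier (Zunits p n)"
  shows "generate (Zunits p n) {g} = {g ^ k mod M | k::nat. True}"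
proof -
  have "generate (Zunits p n) {g} = {g [^]\<^bsub>Zunits p n\<^esub> k | k. k \<in> (UNIV :: nat set)}"
    by (rule group.generate_pow_on_finite_carrier[OF grp finZ g])
  then show ?thesis using powZ[OF g] by simp
qed

lemma unit_of_coprime:
  assumes "\<not> p dvd a"
  shows "int a mod M \<in> carrier (Zunits p n)"
proof -
  have "coprime (int p) (int a)" using assms p
    by (simp add: prime_imp_coprime)
  then have "coprime (int a) M" by (simp add: coprime_commute)
  then show ?thesis unfolding Zunits_def units_of_carrier
    using res.mod_in_res_units M_gt1 by blast
qed

end

lemma exact_val:
  fixes z :: int and p :: nat
  assumes p: "prime p" and z: "z \<noteq> 0" and d: "int p ^ i dvd z"
  shows "\<exists>j\<ge>i. int p ^ j dvd z \<and> \<not> int p ^ (j+1) dvd z"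
proof -
  define j where "j = multiplicity (int p) z"
  have pp: "prime (int p)" using p by simp
  have nu: "\<not> is_unit (int p)" using pp not_prime_unit by blast
  have "j \<ge> i" unfolding j_def by (rule multiplicity_geI[OF z nu d])
  moreover have "int p ^ j dvd z" unfolding j_def by (rule multiplicity_dvd)
  moreover have "\<not> int p ^ (j+1) dvd z"
  proof
    assume "int p ^ (j+1) dvd z"
    then have "multiplicity (int p) z \<ge> j + 1" by (rule multiplicity_geI[OF z nu])
    then show False unfolding j_def by simp
  qed
  ultimately show ?thesis by blast
qed

lemma main_eq:
  assumes p: "prime p" and a: "a \<in> coprimeN p" "a \<ge> 2" and e: "e \<ge> 1"
    and j: "j \<ge> 1" and j2: "p = 2 \<longrightarrow> j \<ge> 2"
    and d1: "int p ^ j dvd int a ^ e - 1" and d2: "\<not> int p ^ (j+1) dvd int a ^ e - 1"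
    and n: "n \<ge> j"
  shows "clos_set p a = {x. x \<ge> 1 \<and> (\<exists>k::nat. [int x = int a ^ k] (mod int p ^ n))}"
proof (rule subset_antisym; rule subsetI)
  fix x assume "x \<in> clos_set p a"
  then have x: "x \<in> coprimeN p" "\<And>m. \<exists>k\<ge>1. [a ^ k = x] (mod p ^ m)"
    unfolding clos_set_def by auto
  obtain k where "[a ^ k = x] (mod p ^ n)" using x(2) by blast
  then have "[int (a ^ k) = int x] (mod int (p ^ n))" by (simp only: cong_int_iff)
  then have "[int x = int a ^ k] (mod int p ^ n)" by (simp add: cong_sym_eq)
  moreover have "x \<ge> 1" using x(1) unfolding coprimeN_def by simp
  ultimately show "x \<in> {x. x \<ge> 1 \<and> (\<exists>k::nat. [int x = int a ^ k] (mod int p ^ n))}" by blast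
next
  fix x assume "x \<in> {x. x \<ge> 1 \<and> (\<exists>k::nat. [int x = int a ^ k] (mod int p ^ n))}"
  then obtain k where x1: "x \<ge> 1" and hx: "[int x = int a ^ k] (mod int p ^ n)" by blast
  have p2: "p \<ge> 2" using p prime_ge_2_nat by blast
  have na: "\<not> p dvd a" using a(1) unfolding coprimeN_def by simp
  have "\<not> p dvd x"
  proof
    assume px: "p dvd x"
    have "int p dvd int p ^ n" using j n by (simp add: dvd_power)
    then have "[int x = int a ^ k] (mod int p)" using hx cong_dvd_modulus by blast
    then have "int p dvd int x \<longleftrightarrow> int p dvd int a ^ k" by (rule cong_dvd_iff)
    then have "int p dvd int a ^ k" using px by simp
    then have "p dvd a ^ k" by (metis of_nat_dvd_iff of_nat_power)
    then have "p dvd a" using p prime_dvd_power by blast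
    then show False using na by simp
  qed
  then have xc: "x \<in> coprimeN p" using x1 unfolding coprimeN_def by simp
  have "\<exists>K\<ge>1. [a ^ K = x] (mod p ^ m)" for m
  proof -
    define M' where "M' = max m n"
    define T where "T = totient (p ^ M')"
    have "coprime p a" using na by (rule prime_imp_coprime[OF p])
    then have cop: "coprime a (p ^ M')" by (simp add: coprime_commute)
    have "[a ^ T = 1] (mod p ^ M')" unfolding T_def by (rule euler_theorem[OF cop])
    then have "[int (a ^ T) = int 1] (mod int (p ^ M'))" by (simp only: cong_int_iff)
    then have aT: "[int a ^ T = 1] (mod int p ^ M')" by simp
    have "0 < p ^ M'" using p2 by simp
    then have T1: "T \<ge> 1" unfolding T_def by (simp add: Suc_leI)
    define y where "y = int x * int a ^ (k * (T - 1))"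
    have kT: "k + k * (T - 1) = k * T" using T1
      by (metis add.commute le_add_diff_inverse mult.right_neutral distrib_left)
    have pw: "int a ^ k * int a ^ (k * (T - 1)) = (int a ^ T) ^ k"
    proof -
      have "int a ^ k * int a ^ (k * (T - 1)) = int a ^ (k + k * (T - 1))" by (simp only: power_add)
      also have "\<dots> = int a ^ (T * k)" using kT by (simp add: mult.commute)
      also have "\<dots> = (int a ^ T) ^ k" by (simp only: power_mult)
      finally show ?thesis .
    qed
    have dn: "int p ^ n dvd int p ^ M'" unfolding M'_def by (intro le_imp_power_dvd) simp
    have h1: "[(int a ^ T) ^ k = 1] (mod int p ^ M')" using cong_pow[OF aT, of k] by simp
    have "[y = int a ^ k * int a ^ (k * (T - 1))] (mod int p ^ n)"
      unfolding y_def by (rule cong_mult[OF hx cong_refl])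
    also note pw
    also have "[(int a ^ T) ^ k = 1] (mod int p ^ n)" by (rule cong_dvd_modulus[OF h1 dn])
    finally have y0: "[y = 1] (mod int p ^ n)" .
    have dj: "int p ^ j dvd int p ^ n" using n by (rule le_imp_power_dvd)
    have y1: "[y = 1] (mod int p ^ j)" by (rule cong_dvd_modulus[OF y0 dj])
    obtain c where c: "[(int a ^ e) ^ c = y] (mod int p ^ (j + (M' - j)))"
      using key_cover[OF p j j2 d1 d2 y1] by blast
    have jM: "j + (M' - j) = M'" using n unfolding M'_def by simp
    have c': "[(int a ^ e) ^ c = y] (mod int p ^ M')" using c unfolding jM .
    have "int a ^ (e * c + k + T) = (int a ^ e) ^ c * int a ^ k * int a ^ T"
      by (simp only: power_add power_mult)
    also have "[\<dots> = y * int a ^ k * 1] (mod int p ^ M')"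
      by (rule cong_mult[OF cong_mult[OF c' cong_refl] aT])
    also have "y * int a ^ k * 1 = int x * (int a ^ T) ^ k"
      unfolding y_def pw[symmetric] by (simp add: mult_ac)
    also have "[\<dots> = int x * 1] (mod int p ^ M')"
      by (rule cong_mult[OF cong_refl h1])
    finally have "[int a ^ (e * c + k + T) = int x] (mod int p ^ M')" by simp
    then have "[int (a ^ (e * c + k + T)) = int x] (mod int (p ^ M'))" by simp
    then have cM: "[a ^ (e * c + k + T) = x] (mod p ^ M')" by (simp only: cong_int_iff)
    have dm: "p ^ m dvd p ^ M'" unfolding M'_def by (intro le_imp_power_dvd) simp
    have "[a ^ (e * c + k + T) = x] (mod p ^ m)" by (rule cong_dvd_modulus_nat[OF cM dm])
    moreover have "e * c + k + T \<ge> 1" using T1 by simp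
    ultimately show ?thesis by blast
  qed
  then show "x \<in> clos_set p a" unfolding clos_set_def using xc by blast
qed


lemma preim_eq:
  assumes p: "prime p" and n: "n \<ge> 1" and a: "\<not> p dvd a"
    and H: "H = generate (Zunits p n) {int a mod int p ^ n}"
  shows "preim p n H = {x. x \<ge> 1 \<and> (\<exists>k::nat. [int x = int a ^ k] (mod int p ^ n))}"
proof -
  interpret zu p n by unfold_locales (use p n in auto)
  have g: "int a mod M \<in> carrier (Zunits p n)" by (rule unit_of_coprime[OF a])
  have H': "H = {int a ^ k mod M | k::nat. True}"
    unfolding H genZ[OF g] by (simp add: power_mod)
  show ?thesis
    unfolding preim_def H' cong_def by auto
qed

theorem lemma4p2:
  fixes p :: nat
  assumes "Factorial_Ring.prime p"
  shows "(\<forall>Y. Y \<in> Xp p \<longrightarrow> (\<exists>n H. n \<ge> 1 \<and> subgroup H (Zunits p n)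
            \<and> cyclic_group (subgroup_generated (Zunits p n) H) \<and> Y = preim p n H))
       \<and> (\<forall>n H. n \<ge> 1 \<and> subgroup H (Zunits p n)
            \<and> cyclic_group (subgroup_generated (Zunits p n) H)
            \<and> card H \<ge> max p 3
            \<longrightarrow> (\<exists>a. a \<in> coprimeN p \<and> preim p n H = (padic_top p) closure_of (powsN a)
                  \<and> (padic_top p) closure_of (powsN a) \<in> Xp p))"
proof (intro conjI allI impI)
  have p: "prime p" using assms by simp
  have p2: "p \<ge> 2" using p prime_ge_2_nat by blast
  have pp: "prime (int p)" using p by simp
  fix Y assume "Y \<in> Xp p"
  then obtain a where Y: "Y = padic_top p closure_of powsN a" and a: "a \<in> coprimeN p" "a \<noteq> 1"
    unfolding Xp_def by blast
  have a2: "a \<ge> 2" using a unfolding coprimeN_def by auto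
  have na: "\<not> p dvd a" using a unfolding coprimeN_def by auto
  define e where "e = totient (p ^ 2)"
  have "0 < p ^ 2" using p2 by simp
  then have e1: "e \<ge> 1" unfolding e_def by (simp add: Suc_leI)
  have "coprime p a" using na by (rule prime_imp_coprime[OF p])
  then have cop: "coprime a (p ^ 2)" by (simp add: coprime_commute)
  have "[a ^ e = 1] (mod p ^ 2)" unfolding e_def by (rule euler_theorem[OF cop])
  then have "[int (a ^ e) = int 1] (mod int (p ^ 2))" by (simp only: cong_int_iff)
  then have "[int a ^ e = 1] (mod int p ^ 2)" by simp
  then have dv: "int p ^ 2 dvd int a ^ e - 1" by (simp add: cong_iff_dvd_diff)
  have h: "int a ^ 1 \<le> int a ^ e" by (rule power_increasing[OF e1]) (use a2 in simp)
  have "int a ^ 1 \<ge> 2" using a2 by simp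
  then have nz: "int a ^ e - 1 \<noteq> 0" using h by linarith
  obtain j where j: "j \<ge> 2" "int p ^ j dvd int a ^ e - 1" "\<not> int p ^ (j+1) dvd int a ^ e - 1"
    using exact_val[OF p nz dv] by blast
  interpret zu p j by unfold_locales (use p j in auto)
  define g where "g = int a mod int p ^ j"
  have g: "g \<in> carrier (Zunits p j)" unfolding g_def by (rule unit_of_coprime[OF na])
  define H where "H = generate (Zunits p j) {g}"
  have sg: "subgroup H (Zunits p j)" unfolding H_def
    by (rule group.generate_is_subgroup[OF grp]) (use g in simp)
  have cyc: "cyclic_group (subgroup_generated (Zunits p j) H)"
    using group.cyclic_sub_iff[OF grp sg] g H_def by blast
  have "Y = clos_set p a" unfolding Y by (rule closure_char[OF p a(1) a2])
  also have "\<dots> = {x. x \<ge> 1 \<and> (\<exists>k::nat. [int x = int a ^ k] (mod int p ^ j))}"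
    by (rule main_eq[OF p a(1) a2 e1 _ _ j(2) j(3)]) (use j in auto)
  also have "\<dots> = preim p j H"
    by (rule preim_eq[symmetric]) (use p j na H_def g_def in auto)
  finally have "Y = preim p j H" .
  then show "\<exists>n H. n \<ge> 1 \<and> subgroup H (Zunits p n)
            \<and> cyclic_group (subgroup_generated (Zunits p n) H) \<and> Y = preim p n H"
    using sg cyc j(1) by (intro exI[of _ j] exI[of _ H]) simp
next
  have p: "prime p" using assms by simp
  have p2: "p \<ge> 2" using p prime_ge_2_nat by blast
  have pp: "prime (int p)" using p by simp
  fix n H assume asm: "n \<ge> 1 \<and> subgroup H (Zunits p n)
            \<and> cyclic_group (subgroup_generated (Zunits p n) H)
            \<and> card H \<ge> max p 3"
  then have n: "n \<ge> 1" and sg: "subgroup H (Zunits p n)"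
    and cyc: "cyclic_group (subgroup_generated (Zunits p n) H)" and cardH: "card H \<ge> max p 3"
    by auto
  interpret zu p n by unfold_locales (use p n in auto)
  obtain g where g: "g \<in> carrier (Zunits p n)" and Hg: "H = generate (Zunits p n) {g}"
    using group.cyclic_sub_iff[OF grp sg] cyc by blast
  have g': "0 < g" "g < M" "coprime g M" using g carrierZ by auto
  define a where "a = nat g + p ^ n"
  have ia: "int a = g + M" unfolding a_def using g' by simp
  have "p ^ n \<ge> p ^ 1" by (rule power_increasing[OF n]) (use p2 in simp)
  then have a2: "a \<ge> 2" unfolding a_def using g' p2 by simp
  have amod: "int a mod M = g" unfolding ia using g' by simp
  have na: "\<not> p dvd a"
  proof
    assume "p dvd a"
    then have "int p dvd g + M" unfolding ia[symmetric] by simp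
    moreover have pM: "int p dvd M" using n by (simp add: dvd_power)
    ultimately have pg: "int p dvd g" by (simp add: dvd_add_left_iff)
    have "is_unit (int p)" by (rule coprime_common_divisor[OF g'(3) pg pM])
    then show False using pp not_prime_unit by blast
  qed
  have ac: "a \<in> coprimeN p" unfolding coprimeN_def using a2 na by simp
  have HA: "H = generate (Zunits p n) {int a mod int p ^ n}" using Hg amod by simp
  have H': "H = {int a ^ k mod M | k::nat. True}"
    unfolding HA genZ[OF unit_of_coprime[OF na]] by (simp add: power_mod)
  define e where "e = (if p = 2 then 2 else p - 1)"
  define i where "i = (if p = 2 then 2 else (1::nat))"
  have e1: "e \<ge> 1" unfolding e_def using p2 by auto
  have eH: "e < max p 3" unfolding e_def using p2 by auto
  have di: "int p ^ i dvd int a ^ e - 1"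
  proof (cases "p = 2")
    case True
    have "odd a" using na True by simp
    then obtain t where t: "a = 2 * t + 1" using oddE by blast
    have "int a ^ e - 1 = 4 * (int t ^ 2 + int t)" unfolding e_def t using True
      by (simp add: power2_eq_square algebra_simps)
    then show ?thesis unfolding i_def using True by simp
  next
    case False
    have "[a ^ (p - 1) = 1] (mod p)" by (rule fermat_theorem[OF p na])
    then have "[int (a ^ (p - 1)) = int 1] (mod int p)" by (simp only: cong_int_iff)
    then have "[int a ^ e = 1] (mod int p)" unfolding e_def using False by simp
    then show ?thesis unfolding i_def using False by (simp add: cong_iff_dvd_diff)
  qed
  have h: "int a ^ 1 \<le> int a ^ e" by (rule power_increasing[OF e1]) (use a2 in simp)
  have "int a ^ 1 \<ge> 2" using a2 by simp
  then have nz: "int a ^ e - 1 \<noteq> 0" using h by linarith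
  obtain j where j: "j \<ge> i" "int p ^ j dvd int a ^ e - 1" "\<not> int p ^ (j+1) dvd int a ^ e - 1"
    using exact_val[OF p nz di] by blast
  have notn: "\<not> int p ^ n dvd int a ^ e - 1"
  proof
    assume "int p ^ n dvd int a ^ e - 1"
    then have ae: "[int a ^ e = 1] (mod M)" by (simp add: cong_iff_dvd_diff)
    have "H \<subseteq> (\<lambda>r. int a ^ r mod M) ` {..<e}"
    proof
      fix h assume "h \<in> H"
      then obtain k where k: "h = int a ^ k mod M" using H' by blast
      have "int a ^ k = int a ^ (e * (k div e) + k mod e)" by (simp only: mult_div_mod_eq)
      also have "\<dots> = (int a ^ e) ^ (k div e) * int a ^ (k mod e)"
        by (simp only: power_add power_mult)
      also have "[\<dots> = 1 ^ (k div e) * int a ^ (k mod e)] (mod M)"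
        by (rule cong_mult[OF cong_pow[OF ae] cong_refl])
      finally have "h = int a ^ (k mod e) mod M" unfolding k cong_def by simp
      moreover have "k mod e < e" using e1 by simp
      ultimately show "h \<in> (\<lambda>r. int a ^ r mod M) ` {..<e}" by blast
    qed
    then have "card H \<le> card ((\<lambda>r. int a ^ r mod M) ` {..<e})" by (rule card_mono[rotated]) simp
    also have "\<dots> \<le> card {..<e}" by (rule card_image_le) simp
    finally have "card H \<le> e" by simp
    then show False using cardH eH by simp
  qed
  have j1: "j \<ge> 1" "p = 2 \<longrightarrow> j \<ge> 2" using j(1) unfolding i_def by (auto split: if_splits)
  have jn: "n \<ge> j"
  proof (rule ccontr)
    assume "\<not> n \<ge> j"
    then have "int p ^ n dvd int p ^ j" by (intro le_imp_power_dvd) simp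
    then show False using j(2) notn dvd_trans by blast
  qed
  have "padic_top p closure_of powsN a = clos_set p a" by (rule closure_char[OF p ac a2])
  also have "\<dots> = {x. x \<ge> 1 \<and> (\<exists>k::nat. [int x = int a ^ k] (mod int p ^ n))}"
    by (rule main_eq[OF p ac a2 e1 j1 j(2) j(3) jn])
  also have "\<dots> = preim p n H"
    by (rule preim_eq[symmetric]) (use p n na HA in auto)
  finally have eq0: "padic_top p closure_of powsN a = preim p n H" .
  have eq: "preim p n H = padic_top p closure_of powsN a" using eq0 by (rule sym)
  have a1: "a \<noteq> 1" using a2 by simp
  have "padic_top p closure_of powsN a \<in> Xp p"
    unfolding Xp_def by (rule CollectI, rule exI[of _ a]) (use ac a1 in simp)
  then show "\<exists>a. a \<in> coprimeN p \<and> preim p n H = padic_top p closure_of powsN a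
                  \<and> padic_top p closure_of powsN a \<in> Xp p"
    by (intro exI[of _ a] conjI ac eq)
qed

end
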